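(* Fix a center $c$ and bandwidth $r>0$, and let $(p^*,q^* )\in(0,1)^2$ maximize $\ell(p,q,K_{c,r})$ over $[0,1]^2$ with finite value. Then, treating $p=p^*,q=q^*,c$ as fixed and differentiating only through the bandwidth, \[ \Big|\frac{\partial}{\partial r}\ell(p^*,q^*,K_{c,r})\Big|\le\frac{4}{e\,r}. \]
   Context: $B\subset\mathbb{R}^d$ finite nonempty, $m:B\to\{0,1\}$, $M=\{x\in B:m(x)=1\}$. $K_{c,r}(x)=\exp(-\|x-c\|^2/r^2)$. For $p,q\in[0,1]$ and $K:B\to[0,1]$: $g(x)=pK(x)+q(1-K(x))$, $\ell(p,q,K)=\frac{1}{|B|}\big(\sum_{x\in M}\log g(x)+\sum_{x\in B\setminus M}\log(1-g(x))\big)$. *)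

theory Defs
  imports "HOL-Analysis.Analysis"
begin

definition kern :: "'a::euclidean_space \<Rightarrow> real \<Rightarrow> 'a \<Rightarrow> real" where
  "kern c r x = exp (- (norm (x - c))\<^sup>2 / r\<^sup>2)"

definition marked :: "'a set \<Rightarrow> ('a \<Rightarrow> nat) \<Rightarrow> 'a set" where
  "marked B m = {x \<in> B. m x = 1}"

definition gfun :: "real \<Rightarrow> real \<Rightarrow> ('a \<Rightarrow> real) \<Rightarrow> 'a \<Rightarrow> real" where
  "gfun p q K x = p * K x + q * (1 - K x)"

text \<open>Log-likelihood (real-valued; meaningful when finite, see ll_finite).\<close>
definition ll :: "'a set \<Rightarrow> ('a \<Rightarrow> nat) \<Rightarrow> real \<Rightarrow> real \<Rightarrow> ('a \<Rightarrow> real) \<Rightarrow> real" where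
  "ll B m p q K = (1 / real (card B)) *
     ((\<Sum>x\<in>marked B m. ln (gfun p q K x)) + (\<Sum>x\<in>B - marked B m. ln (1 - gfun p q K x)))"

definition ll_finite :: "'a set \<Rightarrow> ('a \<Rightarrow> nat) \<Rightarrow> real \<Rightarrow> real \<Rightarrow> ('a \<Rightarrow> real) \<Rightarrow> bool" where
  "ll_finite B m p q K \<longleftrightarrow>
     (\<forall>x\<in>marked B m. gfun p q K x > 0) \<and> (\<forall>x\<in>B - marked B m. 1 - gfun p q K x > 0)"

end

theory Submission
  imports Defs
begin

lemma gfun_bounds:
  fixes p q k :: real
  assumes "0 < p" "p < 1" "0 < q" "q < 1" "0 \<le> k" "k \<le> 1"
  shows "0 < p*k + q*(1-k) \<and> p*k + q*(1-k) < 1"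
proof -
  have "p*k + q*(1-k) = q + (p-q)*k" by (simp add: algebra_simps)
  moreover have "min p q \<le> q + (p-q)*k \<and> q + (p-q)*k \<le> max p q"
  proof (cases "p \<le> q")
    case True
    have h1: "(q-p)*k \<le> q-p" using True assms mult_left_mono[of k 1 "q-p"] by auto
    have h2: "0 \<le> (q-p)*k" using True assms by auto
    have "(p-q)*k = -((q-p)*k)" by (simp add: algebra_simps)
    then show ?thesis using True h1 h2 by (simp add: min_def max_def)
  next
    case False
    have h1: "(p-q)*k \<le> p-q" using False assms mult_left_mono[of k 1 "p-q"] by auto
    have h2: "0 \<le> (p-q)*k" using False assms by auto
    have h3: "q + (p-q)*k \<le> p" using h1 by linarith
    then show ?thesis using False h2 unfolding min_def max_def by auto
  qed
  moreover have "min p q > 0" "max p q < 1" using assms by auto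
  ultimately show ?thesis by linarith
qed

lemma kern_bounds: "0 < kern c r x \<and> kern c r x \<le> 1"
  unfolding kern_def by (auto intro: divide_nonneg_nonneg)

lemma all_finite:
  assumes "0 < p" "p < 1" "0 < q" "q < 1"
  shows "ll_finite B m p q (kern c r)"
  unfolding ll_finite_def gfun_def
proof (intro conjI ballI)
  fix x
  have "0 < p * kern c r x + q * (1 - kern c r x) \<and> p * kern c r x + q * (1 - kern c r x) < 1"
    using gfun_bounds[OF assms] kern_bounds[of c r x] by auto
  then show "0 < p * kern c r x + q * (1 - kern c r x)"
     "0 < 1 - (p * kern c r x + q * (1 - kern c r x))" by auto
qed

lemma kern_deriv:
  assumes "r > 0"
  shows "((\<lambda>s. kern c s x) has_real_derivative (2*(norm(x-c))^2/r^3 * kern c r x)) (at r)"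
  unfolding kern_def using assms
  by (auto intro!: derivative_eq_intros simp: field_simps power2_eq_square power3_eq_cube)

lemma d1: "(a::real) > 0 \<Longrightarrow> a < 1 \<Longrightarrow> ((\<lambda>s. ln (s*a)) has_real_derivative 1) (at 1)"
  by (auto intro!: derivative_eq_intros simp: field_simps)
lemma d2: "(a::real) > 0 \<Longrightarrow> a < 1 \<Longrightarrow> ((\<lambda>s. ln (1 - s*a)) has_real_derivative (- a/(1-a))) (at 1)"
  by (auto intro!: derivative_eq_intros simp: field_simps)
lemma d3:
  assumes "r > 0" "0 < ps" "ps < 1" "0 < qs" "qs < 1"
  shows "((\<lambda>s. ln (gfun ps qs (kern c s) x)) has_real_derivative
     ((ps-qs)*(2*(norm(x-c))^2/r^3 * kern c r x) / gfun ps qs (kern c r) x)) (at r)"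
proof -
  have g: "gfun ps qs (kern c r) x > 0" using all_finite[OF assms(2-5), of UNIV "\<lambda>_. 1" c r]
    unfolding ll_finite_def marked_def by auto
  have e: "\<And>s. gfun ps qs (kern c s) x = qs + (ps-qs)*kern c s x" unfolding gfun_def by (simp add: algebra_simps)
  have k: "((\<lambda>s. qs + (ps-qs)*kern c s x) has_real_derivative (0 + (ps-qs)*(2*(norm(x-c))^2/r^3 * kern c r x))) (at r)"
    by (intro DERIV_add DERIV_const DERIV_cmult kern_deriv assms(1))
  have H: "((\<lambda>s. ln (qs + (ps-qs)*kern c s x)) has_real_derivative
     (1/(qs + (ps-qs)*kern c r x)) * (0 + (ps-qs)*(2*(norm(x-c))^2/r^3 * kern c r x))) (at r)"
    using DERIV_ln_divide[THEN DERIV_chain2, OF _ k] g e by auto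
  show ?thesis unfolding e by (rule DERIV_cong[OF H]) (simp add: field_simps)
qed
lemma d4:
  assumes "r > 0" "0 < ps" "ps < 1" "0 < qs" "qs < 1"
  shows "((\<lambda>s. ln (1 - gfun ps qs (kern c s) x)) has_real_derivative
     (- (ps-qs)*(2*(norm(x-c))^2/r^3 * kern c r x) / (1 - gfun ps qs (kern c r) x))) (at r)"
proof -
  have g: "1 - gfun ps qs (kern c r) x > 0" using all_finite[OF assms(2-5), of UNIV "\<lambda>_. 0" c r]
    unfolding ll_finite_def marked_def by auto
  have e: "\<And>s. 1 - gfun ps qs (kern c s) x = (1-qs) + (-(ps-qs))*kern c s x" unfolding gfun_def by (simp add: algebra_simps)
  have k: "((\<lambda>s. (1-qs) + (-(ps-qs))*kern c s x) has_real_derivative (0 + (-(ps-qs))*(2*(norm(x-c))^2/r^3 * kern c r x))) (at r)"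
    by (intro DERIV_add DERIV_const DERIV_cmult kern_deriv assms(1))
  have H: "((\<lambda>s. ln ((1-qs) + (-(ps-qs))*kern c s x)) has_real_derivative
     (1/((1-qs) + (-(ps-qs))*kern c r x)) * (0 + (-(ps-qs))*(2*(norm(x-c))^2/r^3 * kern c r x))) (at r)"
    using DERIV_ln_divide[THEN DERIV_chain2, OF _ k] g e by auto
  show ?thesis unfolding e by (rule DERIV_cong[OF H]) (simp add: field_simps)
qed

lemma kbound:
  assumes "r > 0"
  shows "0 \<le> 2*(norm(x-c))^2/r^3 * kern c r x \<and> 2*(norm(x-c))^2/r^3 * kern c r x \<le> 2/(exp 1 * r)"
proof -
  define t where "t = (norm(x-c))^2/r^2"
  have t0: "t \<ge> 0" unfolding t_def by simp
  have ke: "kern c r x = exp (-t)" unfolding kern_def t_def by simp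
  have eq: "2*(norm(x-c))^2/r^3 * kern c r x = (2/r) * (t * exp(-t))"
    unfolding ke t_def using assms by (simp add: field_simps power3_eq_cube power2_eq_square)
  have "1 + (t - 1) \<le> exp (t - 1)" by (rule exp_ge_add_one_self)
  then have "t \<le> exp t / exp 1" by (simp add: exp_diff)
  then have "t * exp (-t) \<le> 1 / exp 1" by (simp add: exp_minus field_simps)
  then have "(2/r) * (t * exp(-t)) \<le> (2/r) * (1/exp 1)" using assms by (intro mult_left_mono) auto
  moreover have "0 \<le> (2/r) * (t * exp(-t))" using assms t0 by simp
  ultimately show ?thesis unfolding eq by (simp add: mult.commute)
qed

lemma scale_ok:
  fixes p y :: real
  assumes "0 < p" "p < 1" "\<bar>1 - y\<bar> < 1 - p"
  shows "0 < y*p \<and> y*p < 1"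
proof -
  have y: "0 < y" "y < 2 - p" using assms by auto
  have h1: "y*p < (2-p)*p" using y assms by (intro mult_strict_right_mono) auto
  have e: "(2-p)*p = 1 - (1-p)*(1-p)" by (simp add: algebra_simps)
  moreover have "0 \<le> (1-p)*(1-p)" by simp
  ultimately have "(2-p)*p \<le> 1" by linarith
  then have "y*p < 1" using h1 by linarith
  then show ?thesis using y assms by (auto intro: mult_pos_pos)
qed

theorem lemmaA6:
  fixes B :: "'a::euclidean_space set" and m :: "'a \<Rightarrow> nat"
    and c :: 'a and r ps qs :: real
  assumes "finite B" and "B \<noteq> {}"
    and "\<forall>x\<in>B. m x \<in> {0, 1}"
    and "r > 0"
    and "ps \<in> {0<..<1}" and "qs \<in> {0<..<1}"
    and "ll_finite B m ps qs (kern c r)"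
    and "\<forall>p\<in>{0..1}. \<forall>q\<in>{0..1}. ll_finite B m p q (kern c r) \<longrightarrow>
           ll B m p q (kern c r) \<le> ll B m ps qs (kern c r)"
  shows "\<exists>D. ((\<lambda>s. ll B m ps qs (kern c s)) has_real_derivative D) (at r)
             \<and> \<bar>D\<bar> \<le> 4 / (exp 1 * r)"
proof -
  have ps: "0 < ps" "ps < 1" and qs: "0 < qs" "qs < 1" using assms(5,6) by auto
  define g where "g x = gfun ps qs (kern c r) x" for x
  define M where "M = marked B m"
  define N where "N = B - M"
  define n where "n = real (card B)"
  have n0: "n > 0" unfolding n_def using assms(1,2) by (simp add: card_gt_0_iff)
  have MB: "M \<subseteq> B" unfolding M_def marked_def by auto
  have fM: "finite M" "finite N" using assms(1) MB finite_subset unfolding N_def by auto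
  have gb: "\<And>x. 0 < g x \<and> g x < 1" unfolding g_def gfun_def
    using gfun_bounds[OF ps qs] kern_bounds[of c r] by (meson less_imp_le)
  have gne: "\<And>x. 1 - g x \<noteq> 0" "\<And>x. g x \<noteq> 0" using gb by (metis less_irrefl diff_gt_0_iff_gt)+
  have card: "real (card M) + real (card N) = n"
  proof -
    have "card (M \<union> N) = card M + card N" using fM by (intro card_Un_disjoint) (auto simp: N_def)
    moreover have "M \<union> N = B" using MB unfolding N_def by auto
    ultimately show ?thesis unfolding n_def by simp
  qed
  have opt: "\<And>p q. 0 < p \<Longrightarrow> p < 1 \<Longrightarrow> 0 < q \<Longrightarrow> q < 1 \<Longrightarrow>
     ll B m p q (kern c r) \<le> ll B m ps qs (kern c r)"
    by (rule assms(8)[rule_format]) (auto intro: all_finite)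
  define phi where "phi s = (1/n)*((\<Sum>x\<in>M. ln(s*g x)) + (\<Sum>x\<in>N. ln(1 - s*g x)))" for s
  have phi_ll: "\<And>s. phi s = ll B m (s*ps) (s*qs) (kern c r)"
    unfolding phi_def ll_def gfun_def g_def M_def N_def n_def by (simp add: algebra_simps)
  have Dphi: "(phi has_real_derivative (1/n)*((\<Sum>x\<in>M. 1) + (\<Sum>x\<in>N. - g x/(1-g x)))) (at 1)"
    unfolding phi_def[abs_def] by (intro DERIV_cmult DERIV_add DERIV_sum d1 d2) (auto simp: gb)
  have loc1: "\<forall>y. \<bar>1 - y\<bar> < min (1-ps) (1-qs) \<longrightarrow> phi y \<le> phi 1"
  proof (intro allI impI)
    fix y assume y: "\<bar>1 - y\<bar> < min (1-ps) (1-qs)"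
    have "0 < y*ps \<and> y*ps < 1" using scale_ok[OF ps, of y] y ps by auto
    moreover have "0 < y*qs \<and> y*qs < 1" using scale_ok[OF qs, of y] y qs by auto
    ultimately show "phi y \<le> phi 1" unfolding phi_ll using opt by simp
  qed
  have "(1/n)*((\<Sum>x\<in>M. 1) + (\<Sum>x\<in>N. - g x/(1-g x))) = 0"
    by (rule DERIV_local_max[OF Dphi _ loc1]) (use ps qs in auto)
  then have S1: "(\<Sum>x\<in>N. g x/(1-g x)) = real (card M)" using n0 by (simp add: sum_negf)
  define psi where "psi s = (1/n)*((\<Sum>x\<in>M. ln(1 - s*(1-g x))) + (\<Sum>x\<in>N. ln(s*(1-g x))))" for s
  have psi_ll: "\<And>s. psi s = ll B m (1-s*(1-ps)) (1-s*(1-qs)) (kern c r)"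
    unfolding psi_def ll_def gfun_def g_def M_def N_def n_def by (simp add: algebra_simps)
  have Dpsi: "(psi has_real_derivative (1/n)*((\<Sum>x\<in>M. - (1-g x)/(1-(1-g x))) + (\<Sum>x\<in>N. 1))) (at 1)"
    unfolding psi_def[abs_def] by (intro DERIV_cmult DERIV_add DERIV_sum d1 d2) (auto simp: gb)
  have loc2: "\<forall>y. \<bar>1 - y\<bar> < min ps qs \<longrightarrow> psi y \<le> psi 1"
  proof (intro allI impI)
    fix y assume y: "\<bar>1 - y\<bar> < min ps qs"
    have "0 < y*(1-ps) \<and> y*(1-ps) < 1" using scale_ok[of "1-ps" y] y ps by auto
    moreover have "0 < y*(1-qs) \<and> y*(1-qs) < 1" using scale_ok[of "1-qs" y] y qs by auto
    ultimately show "psi y \<le> psi 1" unfolding psi_ll using opt by simp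
  qed
  have "(1/n)*((\<Sum>x\<in>M. - (1-g x)/(1-(1-g x))) + (\<Sum>x\<in>N. 1)) = 0"
    by (rule DERIV_local_max[OF Dpsi _ loc2]) (use ps qs in auto)
  moreover have "(\<Sum>x\<in>M. - (1-g x)/(1-(1-g x))) = - (\<Sum>x\<in>M. (1-g x)/g x)"
    unfolding sum_negf[symmetric] by (rule sum.cong) (auto simp: minus_divide_left)
  ultimately have S2: "(\<Sum>x\<in>M. (1-g x)/g x) = real (card N)" using n0 by simp
  have SN: "(\<Sum>x\<in>N. 1/(1-g x)) = n"
  proof -
    have "(\<Sum>x\<in>N. 1/(1-g x)) = (\<Sum>x\<in>N. 1 + g x/(1-g x))"
    proof (rule sum.cong)
      fix x have "g x < 1" using gb[of x] by auto
      then show "1/(1-g x) = 1 + g x/(1-g x)" by (simp add: field_simps)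
    qed simp
    also have "\<dots> = real (card N) + real (card M)" by (simp add: sum.distrib S1)
    finally show ?thesis using card by simp
  qed
  have SM: "(\<Sum>x\<in>M. 1/g x) = n"
  proof -
    have "(\<Sum>x\<in>M. 1/g x) = (\<Sum>x\<in>M. 1 + (1-g x)/g x)"
    proof (rule sum.cong)
      fix x have "g x > 0" using gb[of x] by auto
      then show "1/g x = 1 + (1-g x)/g x" by (simp add: field_simps)
    qed simp
    also have "\<dots> = real (card M) + real (card N)" by (simp add: sum.distrib S2)
    finally show ?thesis using card by simp
  qed
  define k' where "k' x = 2*(norm(x-c))^2/r^3 * kern c r x" for x
  define D where "D = (1/n)*((\<Sum>x\<in>M. (ps-qs)*k' x / g x) + (\<Sum>x\<in>N. - (ps-qs)*k' x / (1 - g x)))"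
  have DD: "((\<lambda>s. ll B m ps qs (kern c s)) has_real_derivative D) (at r)"
    unfolding ll_def D_def M_def[symmetric] N_def[symmetric] n_def[symmetric] k'_def g_def
    by (intro DERIV_cmult DERIV_add DERIV_sum d3 d4 assms(4) ps qs)
  define c0 where "c0 = 2/(exp 1 * r)"
  have kb: "\<And>x. 0 \<le> k' x \<and> k' x \<le> c0" unfolding k'_def c0_def using kbound[OF assms(4)] by blast
  have pq: "\<bar>ps - qs\<bar> \<le> 1" using ps qs by auto
  have tb: "\<And>a x. 0 < a \<Longrightarrow> \<bar>(ps-qs)*k' x / a\<bar> \<le> c0 / a"
  proof -
    fix a x assume a: "(0::real) < a"
    have "\<bar>(ps-qs)*k' x / a\<bar> = \<bar>ps-qs\<bar> * k' x / a" using a kb[of x] by (simp add: abs_mult)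
    also have "\<dots> \<le> 1 * c0 / a" using a kb[of x] pq
      by (intro divide_right_mono mult_mono) auto
    finally show "\<bar>(ps-qs)*k' x / a\<bar> \<le> c0 / a" by simp
  qed
  have A1: "\<bar>\<Sum>x\<in>M. (ps-qs)*k' x / g x\<bar> \<le> c0 * n"
  proof -
    have "\<bar>\<Sum>x\<in>M. (ps-qs)*k' x / g x\<bar> \<le> (\<Sum>x\<in>M. \<bar>(ps-qs)*k' x / g x\<bar>)" by (rule sum_abs)
    also have "\<dots> \<le> (\<Sum>x\<in>M. c0 / g x)"
    proof (rule sum_mono)
      fix x have "0 < g x" using gb[of x] by auto
      then show "\<bar>(ps-qs)*k' x / g x\<bar> \<le> c0 / g x" by (rule tb)
    qed
    also have "\<dots> = c0 * (\<Sum>x\<in>M. 1 / g x)" by (simp add: sum_distrib_left)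
    finally show ?thesis using SM by simp
  qed
  have A2: "\<bar>\<Sum>x\<in>N. - (ps-qs)*k' x / (1 - g x)\<bar> \<le> c0 * n"
  proof -
    have "\<bar>\<Sum>x\<in>N. - (ps-qs)*k' x / (1 - g x)\<bar> \<le> (\<Sum>x\<in>N. \<bar>(ps-qs)*k' x / (1 - g x)\<bar>)"
      using sum_abs[of "\<lambda>x. - (ps-qs)*k' x / (1 - g x)" N] by (simp add: abs_mult abs_minus_commute)
    also have "\<dots> \<le> (\<Sum>x\<in>N. c0 / (1 - g x))"
    proof (rule sum_mono)
      fix x have "0 < 1 - g x" using gb[of x] by auto
      then show "\<bar>(ps-qs)*k' x / (1 - g x)\<bar> \<le> c0 / (1 - g x)" by (rule tb)
    qed
    also have "\<dots> = c0 * (\<Sum>x\<in>N. 1 / (1 - g x))" by (simp add: sum_distrib_left)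
    finally show ?thesis using SN by simp
  qed
  have T: "\<bar>(\<Sum>x\<in>M. (ps-qs)*k' x / g x) + (\<Sum>x\<in>N. - (ps-qs)*k' x / (1 - g x))\<bar> \<le> c0*n + c0*n"
    using A1 A2 abs_triangle_ineq[of "\<Sum>x\<in>M. (ps-qs)*k' x / g x" "\<Sum>x\<in>N. - (ps-qs)*k' x / (1 - g x)"]
    by linarith
  have "\<bar>D\<bar> = (1/n) * \<bar>(\<Sum>x\<in>M. (ps-qs)*k' x / g x) + (\<Sum>x\<in>N. - (ps-qs)*k' x / (1 - g x))\<bar>"
    unfolding D_def using n0 by (simp add: abs_mult)
  also have "\<dots> \<le> (1/n) * (c0*n + c0*n)" using T n0 by (intro mult_left_mono) auto
  also have "\<dots> = 4 / (exp 1 * r)" unfolding c0_def using n0 by (simp add: field_simps)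
  finally show ?thesis using DD by blast
qed

end
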